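(* Let $G=(V,E,w)$ be an undirected graph without self-loops, with $n\ge 2$ vertices, positive edge weights and conductance $\Phi_G$. Then every optimal HC tree $\mathcal{T}^*$ of $G$ (equivalently, $\mathsf{OPT}_G$) satisfies \[ \mathrm{cost}_G(\mathcal{T}^* ) \ge \frac{2\Phi_G}{9}\cdot \max\left\{\frac{\mathrm{vol}(G)^2}{d_{\max}},\; d_{\min}\cdot n^2\right\} = \frac{2\Phi_G}{9}\cdot n\cdot \mathrm{vol}(G)\cdot \max\left\{\frac{d_{\mathrm{avg}}}{d_{\max}},\frac{d_{\min}}{d_{\mathrm{avg}}}\right\}. \]
   Context: $d_u=\sum_{v} w_{uv}$; $d_{\min},d_{\max}$ are the minimum and maximum degree, and $d_{\mathrm{avg}}=\sum_u d_u/n$. $\mathrm{vol}(S)=\sum_{u\in S}d_u$, $\mathrm{vol}(G)=\mathrm{vol}(V)$. For $S\subseteq V$, $w(S,T)$ is the total weight of edges between $S$ and $T$; the conductance of nonempty $S$ is $\Phi_G(S)=w(S,V\setminus S)/\mathrm{vol}(S)$, and $\Phi_G=\min\{\Phi_G(S): \emptyset\ne S\subset V,\ \mathrm{vol}(S)\le \mathrm{vol}(V)/2\}$. An HC tree of $G$ is a rooted binary tree whose leaves are in bijection with $V$; internal nodes are identified with the vertex sets of their leaves; $u\vee v$ is the lowest common ancestor. $\mathrm{cost}_G(\mathcal{T})=\sum_{\{u,v\}\in E}w_{uv}|\mathsf{leaves}(\mathcal{T}[u\vee v])|$, and $\mathsf{OPT}_G=\min_{\mathcal{T}}\mathrm{cost}_G(\mathcal{T})$.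 *)

theory Defs
  imports Complex_Main
begin

text \<open>An undirected weighted graph on a finite vertex set V with weight function w:
  w is symmetric, nonnegative, zero on the diagonal (no self-loops); the edges are
  the unordered pairs {u,v} with w u v > 0 (so all edge weights are positive).\<close>

definition wgraph :: "'a set \<Rightarrow> ('a \<Rightarrow> 'a \<Rightarrow> real) \<Rightarrow> bool" where
  "wgraph V w \<longleftrightarrow> finite V \<and> (\<forall>u v. w u v = w v u) \<and> (\<forall>u v. w u v \<ge> 0)
     \<and> (\<forall>u. w u u = 0) \<and> (\<forall>u v. w u v \<noteq> 0 \<longrightarrow> u \<in> V \<and> v \<in> V)"

definition deg :: "'a set \<Rightarrow> ('a \<Rightarrow> 'a \<Rightarrow> real) \<Rightarrow> 'a \<Rightarrow> real" where
  "deg V w u = (\<Sum>v\<in>V. w u v)"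

definition dmin :: "'a set \<Rightarrow> ('a \<Rightarrow> 'a \<Rightarrow> real) \<Rightarrow> real" where
  "dmin V w = Min (deg V w ` V)"

definition dmax :: "'a set \<Rightarrow> ('a \<Rightarrow> 'a \<Rightarrow> real) \<Rightarrow> real" where
  "dmax V w = Max (deg V w ` V)"

definition davg :: "'a set \<Rightarrow> ('a \<Rightarrow> 'a \<Rightarrow> real) \<Rightarrow> real" where
  "davg V w = (\<Sum>u\<in>V. deg V w u) / real (card V)"

definition vol :: "'a set \<Rightarrow> ('a \<Rightarrow> 'a \<Rightarrow> real) \<Rightarrow> 'a set \<Rightarrow> real" where
  "vol V w S = (\<Sum>u\<in>S. deg V w u)"

definition cut_weight :: "('a \<Rightarrow> 'a \<Rightarrow> real) \<Rightarrow> 'a set \<Rightarrow> 'a set \<Rightarrow> real" where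
  "cut_weight w S T = (\<Sum>u\<in>S. \<Sum>v\<in>T. w u v)"

definition set_conductance :: "'a set \<Rightarrow> ('a \<Rightarrow> 'a \<Rightarrow> real) \<Rightarrow> 'a set \<Rightarrow> real" where
  "set_conductance V w S = cut_weight w S (V - S) / vol V w S"

definition conductance :: "'a set \<Rightarrow> ('a \<Rightarrow> 'a \<Rightarrow> real) \<Rightarrow> real" where
  "conductance V w = Min (set_conductance V w `
      {S. S \<noteq> {} \<and> S \<subset> V \<and> vol V w S \<le> vol V w V / 2})"

datatype 'a hctree = Leaf 'a | Node "'a hctree" "'a hctree"

fun leaves :: "'a hctree \<Rightarrow> 'a list" where
  "leaves (Leaf a) = [a]"
| "leaves (Node l r) = leaves l @ leaves r"

fun subtrees :: "'a hctree \<Rightarrow> 'a hctree set" where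
  "subtrees (Leaf a) = {Leaf a}"
| "subtrees (Node l r) = insert (Node l r) (subtrees l \<union> subtrees r)"

definition is_hctree :: "'a set \<Rightarrow> 'a hctree \<Rightarrow> bool" where
  "is_hctree V T \<longleftrightarrow> distinct (leaves T) \<and> set (leaves T) = V"

text \<open>Number of leaves of the subtree rooted at the lowest common ancestor of u and v.\<close>
definition lca_size :: "'a hctree \<Rightarrow> 'a \<Rightarrow> 'a \<Rightarrow> nat" where
  "lca_size T u v = Min {length (leaves S) | S. S \<in> subtrees T \<and> u \<in> set (leaves S) \<and> v \<in> set (leaves S)}"

text \<open>cost = sum over edges {u,v} of w(u,v) times |leaves(T[u \<or> v])|; each unordered
  edge appears twice among the ordered pairs, hence the factor 1/2.\<close>
definition hc_cost :: "'a set \<Rightarrow> ('a \<Rightarrow> 'a \<Rightarrow> real) \<Rightarrow> 'a hctree \<Rightarrow> real" where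
  "hc_cost V w T = (1/2) * (\<Sum>u\<in>V. \<Sum>v\<in>V. w u v * real (lca_size T u v))"

definition optimal_hctree :: "'a set \<Rightarrow> ('a \<Rightarrow> 'a \<Rightarrow> real) \<Rightarrow> 'a hctree \<Rightarrow> bool" where
  "optimal_hctree V w T \<longleftrightarrow> is_hctree V T \<and> (\<forall>T'. is_hctree V T' \<longrightarrow> hc_cost V w T \<le> hc_cost V w T')"

end

theory Submission
  imports Defs
begin


lemma leaves_ne: "leaves S \<noteq> []"
  by (induction S) auto

lemma subtrees_leaves: "S' \<in> subtrees S \<Longrightarrow> set (leaves S') \<subseteq> set (leaves S) \<and> length (leaves S') \<le> length (leaves S)"
  by (induction S) auto

lemma finite_subtrees: "finite (subtrees S)"
  by (induction S) auto

lemma self_subtrees: "S \<in> subtrees S"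
  by (cases S) auto

fun lca' :: "'a hctree \<Rightarrow> 'a \<Rightarrow> 'a \<Rightarrow> nat" where
  "lca' (Leaf a) u v = 1"
| "lca' (Node l r) u v = (if u \<in> set (leaves l) \<and> v \<in> set (leaves l) then lca' l u v
     else if u \<in> set (leaves r) \<and> v \<in> set (leaves r) then lca' r u v
     else length (leaves (Node l r)))"

definition Aset :: "'a hctree \<Rightarrow> 'a \<Rightarrow> 'a \<Rightarrow> nat set" where
  "Aset S u v = {length (leaves S') | S'. S' \<in> subtrees S \<and> u \<in> set (leaves S') \<and> v \<in> set (leaves S')}"

lemma Aset_finite: "finite (Aset S u v)"
  unfolding Aset_def using finite_subtrees[of S] by auto

lemma Aset_ne: "u \<in> set (leaves S) \<Longrightarrow> v \<in> set (leaves S) \<Longrightarrow> Aset S u v \<noteq> {}"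
  unfolding Aset_def using self_subtrees[of S] by auto

lemma Aset_le: "x \<in> Aset S u v \<Longrightarrow> x \<le> length (leaves S)"
  unfolding Aset_def using subtrees_leaves by auto

lemma Aset_empty: "u \<notin> set (leaves S) \<Longrightarrow> Aset S u v = {}"
  unfolding Aset_def using subtrees_leaves by blast

lemma Aset_empty2: "v \<notin> set (leaves S) \<Longrightarrow> Aset S u v = {}"
  unfolding Aset_def using subtrees_leaves by blast

lemma Aset_Node: "Aset (Node l r) u v = (if u \<in> set (leaves (Node l r)) \<and> v \<in> set (leaves (Node l r)) then
    insert (length (leaves (Node l r))) (Aset l u v \<union> Aset r u v) else Aset l u v \<union> Aset r u v)"
  unfolding Aset_def apply (simp only: subtrees.simps) apply (rule set_eqI) apply (simp only: mem_Collect_eq) apply (auto)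
  by (rule exI[of _ "Node l r"], simp)+

lemma lca_eq: "distinct (leaves S) \<Longrightarrow> u \<in> set (leaves S) \<Longrightarrow> v \<in> set (leaves S)
   \<Longrightarrow> Min (Aset S u v) = lca' S u v"
proof (induction S)
  case (Leaf a)
  have "Aset (Leaf a) u v = {1}" unfolding Aset_def using Leaf.prems by auto
  then show ?case by simp
next
  case (Node l r)
  have dj: "set (leaves l) \<inter> set (leaves r) = {}" using Node.prems(1) by auto
  have ltl: "length (leaves l) < length (leaves (Node l r))" using leaves_ne[of r] by simp
  have ltr: "length (leaves r) < length (leaves (Node l r))" using leaves_ne[of l] by simp
  have uv: "u \<in> set (leaves (Node l r))" "v \<in> set (leaves (Node l r))" using Node.prems by auto
  have A0: "Aset (Node l r) u v = insert (length (leaves (Node l r))) (Aset l u v \<union> Aset r u v)"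
    apply (subst Aset_Node)
    apply (rule if_P)
    using uv by (rule conjI)
  show ?case
  proof (cases "u \<in> set (leaves l) \<and> v \<in> set (leaves l)")
    case True
    then have "u \<notin> set (leaves r)" using dj by blast
    then have e: "Aset r u v = {}" by (rule Aset_empty)
    have m: "Min (Aset l u v) \<in> Aset l u v" using True by (simp add: Min_in Aset_finite Aset_ne)
    have le: "Min (Aset l u v) \<le> length (leaves l)" using Aset_le[OF m] .
    have A: "Aset (Node l r) u v = insert (length (leaves (Node l r))) (Aset l u v)"
      unfolding A0 e by simp
    have "Min (Aset (Node l r) u v) = min (length (leaves (Node l r))) (Min (Aset l u v))"
      unfolding A using m by (intro Min_insert[OF Aset_finite]) blast
    also have "\<dots> = Min (Aset l u v)" using le ltl by simp
    also have "\<dots> = lca' l u v" using Node.IH(1) Node.prems(1) True by simp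
    finally show ?thesis using True by simp
  next
    case F: False
    show ?thesis
    proof (cases "u \<in> set (leaves r) \<and> v \<in> set (leaves r)")
      case True
      then have "u \<notin> set (leaves l)" using dj by blast
      then have e: "Aset l u v = {}" by (rule Aset_empty)
      have m: "Min (Aset r u v) \<in> Aset r u v" using True by (simp add: Min_in Aset_finite Aset_ne)
      have le: "Min (Aset r u v) \<le> length (leaves r)" using Aset_le[OF m] .
      have A: "Aset (Node l r) u v = insert (length (leaves (Node l r))) (Aset r u v)"
        unfolding A0 e by simp
      have "Min (Aset (Node l r) u v) = min (length (leaves (Node l r))) (Min (Aset r u v))"
        unfolding A using m by (intro Min_insert[OF Aset_finite]) blast
      also have "\<dots> = Min (Aset r u v)" using le ltr by simp
      also have "\<dots> = lca' r u v" using Node.IH(2) Node.prems(1) True by simp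
      finally show ?thesis using True F by auto
    next
      case False
      have "u \<notin> set (leaves l) \<or> v \<notin> set (leaves l)" using F by simp
      then have e1: "Aset l u v = {}" using Aset_empty Aset_empty2 by metis
      have "u \<notin> set (leaves r) \<or> v \<notin> set (leaves r)" using False by simp
      then have e2: "Aset r u v = {}" using Aset_empty Aset_empty2 by metis
      have A: "Aset (Node l r) u v = {length (leaves (Node l r))}"
        unfolding A0 e1 e2 by simp
      show ?thesis unfolding A using F False by auto
    qed
  qed
qed

lemma lca_size_eq: "lca_size S u v = lca' S u v" if "distinct (leaves S)" "u \<in> set (leaves S)" "v \<in> set (leaves S)"
proof -
  have "lca_size S u v = Min (Aset S u v)" unfolding lca_size_def Aset_def by (rule refl)
  then show ?thesis using lca_eq that by simp
qed



fun gk :: "'a set \<Rightarrow> ('a \<Rightarrow> 'a \<Rightarrow> real) \<Rightarrow> nat \<Rightarrow> 'a hctree \<Rightarrow> real" where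
  "gk V w k (Leaf a) = cut_weight w {a} (V - {a})"
| "gk V w k (Node l r) = (if length (leaves (Node l r)) \<le> k
     then cut_weight w (set (leaves (Node l r))) (V - set (leaves (Node l r)))
     else gk V w k l + gk V w k r)"

lemma gk_big: "length (leaves S) \<le> k \<Longrightarrow> gk V w k S = cut_weight w (set (leaves S)) (V - set (leaves S))"
  by (cases S) auto

lemma gk_small: "k < length (leaves (Node l r)) \<Longrightarrow> gk V w k (Node l r) = gk V w k l + gk V w k r"
  by simp

lemma cut_union1: "finite A \<Longrightarrow> finite B \<Longrightarrow> A \<inter> B = {} \<Longrightarrow>
   cut_weight w (A \<union> B) C = cut_weight w A C + cut_weight w B C"
  unfolding cut_weight_def by (rule sum.union_disjoint)

lemma cut_union2: "finite B \<Longrightarrow> finite C \<Longrightarrow> B \<inter> C = {} \<Longrightarrow>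
   cut_weight w A (B \<union> C) = cut_weight w A B + cut_weight w A C"
  unfolding cut_weight_def by (simp add: sum.union_disjoint sum.distrib)

lemma cut_nonneg: "(\<forall>u v. w u v \<ge> 0) \<Longrightarrow> cut_weight w A B \<ge> 0"
  unfolding cut_weight_def by (simp add: sum_nonneg)

lemma sum_tail:
  fixes f :: "nat \<Rightarrow> real"
  assumes "a \<le> b" "\<And>k. a \<le> k \<Longrightarrow> f k = c"
  shows "(\<Sum>k<b. f k) = (\<Sum>k<a. f k) + real (b - a) * c"
  using assms(1)
proof (induction b rule: dec_induct)
  case base
  then show ?case by simp
next
  case (step n)
  have "f n = c" using assms(2) step.hyps(1) .
  then show ?case using step by (simp add: Suc_diff_le algebra_simps)
qed

lemma D_eq:
  assumes "finite V" "\<forall>u. w u u = 0"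
  shows "distinct (leaves S) \<Longrightarrow> set (leaves S) \<subseteq> V \<Longrightarrow>
    (\<Sum>u\<in>set (leaves S). \<Sum>v\<in>set (leaves S). w u v * real (lca' S u v))
    + real (length (leaves S)) * cut_weight w (set (leaves S)) (V - set (leaves S))
    = (\<Sum>k<length (leaves S). gk V w k S)"
proof (induction S)
  case (Leaf a)
  then show ?case using assms(2) by simp
next
  case (Node l r)
  define Ll where "Ll = set (leaves l)"
  define Lr where "Lr = set (leaves r)"
  define n where "n = length (leaves (Node l r))"
  define nl where "nl = length (leaves l)"
  define nr where "nr = length (leaves r)"
  have dl: "distinct (leaves l)" and dr: "distinct (leaves r)" and dj: "Ll \<inter> Lr = {}"
    using Node.prems(1) by (auto simp: Ll_def Lr_def)
  have sl: "Ll \<subseteq> V" and sr: "Lr \<subseteq> V" using Node.prems(2) by (auto simp: Ll_def Lr_def)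
  have fl: "finite Ll" and fr: "finite Lr" by (auto simp: Ll_def Lr_def)
  have L: "set (leaves (Node l r)) = Ll \<union> Lr" by (simp add: Ll_def Lr_def)
  have nn: "n = nl + nr" by (simp add: n_def nl_def nr_def)
  have IHl: "(\<Sum>u\<in>Ll. \<Sum>v\<in>Ll. w u v * real (lca' l u v)) + real nl * cut_weight w Ll (V - Ll)
     = (\<Sum>k<nl. gk V w k l)" using Node.IH(1)[OF dl] sl by (simp add: Ll_def nl_def)
  have IHr: "(\<Sum>u\<in>Lr. \<Sum>v\<in>Lr. w u v * real (lca' r u v)) + real nr * cut_weight w Lr (V - Lr)
     = (\<Sum>k<nr. gk V w k r)" using Node.IH(2)[OF dr] sr by (simp add: Lr_def nr_def)
  let ?F = "\<lambda>u. \<Sum>v\<in>Ll \<union> Lr. w u v * real (lca' (Node l r) u v)"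
  have Fl: "?F u = (\<Sum>v\<in>Ll. w u v * real (lca' l u v)) + real n * (\<Sum>v\<in>Lr. w u v)" if "u \<in> Ll" for u
  proof -
    have "?F u = (\<Sum>v\<in>Ll. w u v * real (lca' (Node l r) u v)) + (\<Sum>v\<in>Lr. w u v * real (lca' (Node l r) u v))"
      using fl fr dj by (rule sum.union_disjoint)
    also have "(\<Sum>v\<in>Ll. w u v * real (lca' (Node l r) u v)) = (\<Sum>v\<in>Ll. w u v * real (lca' l u v))"
      by (rule sum.cong) (use that in \<open>auto simp: Ll_def\<close>)
    also have "(\<Sum>v\<in>Lr. w u v * real (lca' (Node l r) u v)) = (\<Sum>v\<in>Lr. w u v * real n)"
      by (rule sum.cong) (use that dj in \<open>auto simp: Ll_def Lr_def n_def\<close>)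
    finally show ?thesis by (simp add: sum_distrib_left mult.commute)
  qed
  have Fr: "?F u = (\<Sum>v\<in>Lr. w u v * real (lca' r u v)) + real n * (\<Sum>v\<in>Ll. w u v)" if "u \<in> Lr" for u
  proof -
    have "?F u = (\<Sum>v\<in>Ll. w u v * real (lca' (Node l r) u v)) + (\<Sum>v\<in>Lr. w u v * real (lca' (Node l r) u v))"
      using fl fr dj by (rule sum.union_disjoint)
    also have "(\<Sum>v\<in>Lr. w u v * real (lca' (Node l r) u v)) = (\<Sum>v\<in>Lr. w u v * real (lca' r u v))"
      by (rule sum.cong) (use that dj in \<open>auto simp: Ll_def Lr_def\<close>)
    also have "(\<Sum>v\<in>Ll. w u v * real (lca' (Node l r) u v)) = (\<Sum>v\<in>Ll. w u v * real n)"
      by (rule sum.cong) (use that dj in \<open>auto simp: Ll_def Lr_def n_def\<close>)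
    finally show ?thesis by (simp add: sum_distrib_left mult.commute)
  qed
  have D: "(\<Sum>u\<in>Ll \<union> Lr. ?F u) = (\<Sum>u\<in>Ll. \<Sum>v\<in>Ll. w u v * real (lca' l u v))
     + (\<Sum>u\<in>Lr. \<Sum>v\<in>Lr. w u v * real (lca' r u v)) + real n * (cut_weight w Ll Lr + cut_weight w Lr Ll)"
  proof -
    have "(\<Sum>u\<in>Ll \<union> Lr. ?F u) = (\<Sum>u\<in>Ll. ?F u) + (\<Sum>u\<in>Lr. ?F u)"
      using fl fr dj by (rule sum.union_disjoint)
    also have "(\<Sum>u\<in>Ll. ?F u) = (\<Sum>u\<in>Ll. (\<Sum>v\<in>Ll. w u v * real (lca' l u v)) + real n * (\<Sum>v\<in>Lr. w u v))"
      by (rule sum.cong[OF refl Fl])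
    also have "(\<Sum>u\<in>Lr. ?F u) = (\<Sum>u\<in>Lr. (\<Sum>v\<in>Lr. w u v * real (lca' r u v)) + real n * (\<Sum>v\<in>Ll. w u v))"
      by (rule sum.cong[OF refl Fr])
    finally show ?thesis
      by (simp add: sum.distrib sum_distrib_left cut_weight_def algebra_simps)
  qed
  have VL: "V - Ll = Lr \<union> (V - (Ll \<union> Lr))" using sr dj by auto
  have VR: "V - Lr = Ll \<union> (V - (Ll \<union> Lr))" using sl dj by auto
  have fV: "finite (V - (Ll \<union> Lr))" using assms(1) by simp
  have el: "cut_weight w Ll (V - Ll) = cut_weight w Ll Lr + cut_weight w Ll (V - (Ll \<union> Lr))"
    unfolding VL by (rule cut_union2[OF fr fV]) auto
  have er: "cut_weight w Lr (V - Lr) = cut_weight w Lr Ll + cut_weight w Lr (V - (Ll \<union> Lr))"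
    unfolding VR by (rule cut_union2[OF fl fV]) auto
  have es: "cut_weight w (Ll \<union> Lr) (V - (Ll \<union> Lr)) = cut_weight w Ll (V - (Ll \<union> Lr)) + cut_weight w Lr (V - (Ll \<union> Lr))"
    by (rule cut_union1[OF fl fr dj])
  have G: "(\<Sum>k<n. gk V w k (Node l r)) = (\<Sum>k<n. gk V w k l) + (\<Sum>k<n. gk V w k r)"
  proof -
    have "(\<Sum>k<n. gk V w k (Node l r)) = (\<Sum>k<n. gk V w k l + gk V w k r)"
      by (rule sum.cong) (auto simp: n_def simp del: gk.simps intro: gk_small)
    then show ?thesis by (simp add: sum.distrib)
  qed
  have Gl: "(\<Sum>k<n. gk V w k l) = (\<Sum>k<nl. gk V w k l) + real (n - nl) * cut_weight w Ll (V - Ll)"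
    by (rule sum_tail) (auto simp: nn nl_def Ll_def intro: gk_big)
  have Gr: "(\<Sum>k<n. gk V w k r) = (\<Sum>k<nr. gk V w k r) + real (n - nr) * cut_weight w Lr (V - Lr)"
    by (rule sum_tail) (auto simp: nn nr_def Lr_def intro: gk_big)
  have rl: "real (n - nl) = real n - real nl" "real (n - nr) = real n - real nr" using nn by auto
  show ?case
    unfolding L n_def[symmetric]
    using D G Gl Gr IHl IHr el er es rl by (simp add: algebra_simps)
qed



lemma gk_nonneg: "(\<forall>u v. w u v \<ge> 0) \<Longrightarrow> gk V w k S \<ge> 0"
  by (induction S) (auto simp: cut_nonneg)

lemma g_lower:
  assumes "finite V"
    and c: "\<And>X. X \<subseteq> V \<Longrightarrow> X \<noteq> {} \<Longrightarrow> card X \<le> max k 1 \<Longrightarrow> sum c X \<le> cut_weight w X (V - X)"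
  shows "distinct (leaves S) \<Longrightarrow> set (leaves S) \<subseteq> V \<Longrightarrow> sum c (set (leaves S)) \<le> gk V w k S"
proof (induction S)
  case (Leaf a)
  then show ?case using c[of "{a}"] by simp
next
  case (Node l r)
  show ?case
  proof (cases "length (leaves (Node l r)) \<le> k")
    case True
    have "card (set (leaves (Node l r))) = length (leaves (Node l r))"
      using Node.prems(1) by (rule distinct_card)
    then have "card (set (leaves (Node l r))) \<le> max k 1" using True by simp
    moreover have "set (leaves (Node l r)) \<noteq> {}" using leaves_ne[of l] by simp
    ultimately show ?thesis using c[OF Node.prems(2)] True by simp
  next
    case False
    have dj: "set (leaves l) \<inter> set (leaves r) = {}" using Node.prems(1) by auto
    have "sum c (set (leaves (Node l r))) = sum c (set (leaves l)) + sum c (set (leaves r))"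
      using dj by (simp add: sum.union_disjoint)
    also have "\<dots> \<le> gk V w k l + gk V w k r"
      using Node.IH Node.prems by (intro add_mono) auto
    finally show ?thesis using False by simp
  qed
qed

lemma count_bound:
  fixes f :: "nat \<Rightarrow> real"
  assumes "m < n" "\<And>k. k \<le> m \<Longrightarrow> B \<le> f k" "\<And>k. 0 \<le> f k"
  shows "real (m+1) * B \<le> (\<Sum>k<n. f k)"
proof -
  have "real (m+1) * B = (\<Sum>k\<in>{..m}. B)" by simp
  also have "\<dots> \<le> (\<Sum>k\<in>{..m}. f k)" using assms(2) by (intro sum_mono) auto
  also have "\<dots> \<le> (\<Sum>k<n. f k)" using assms(1,3) by (intro sum_mono2) auto
  finally show ?thesis .
qed

lemma deg_nonneg: "wgraph V w \<Longrightarrow> deg V w a \<ge> 0"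
  unfolding wgraph_def deg_def by (simp add: sum_nonneg)

lemma vol_nonneg: "wgraph V w \<Longrightarrow> vol V w X \<ge> 0"
  unfolding vol_def by (simp add: sum_nonneg deg_nonneg)

lemma deg_half:
  assumes g: "wgraph V w" and a: "a \<in> V"
  shows "2 * deg V w a \<le> vol V w V"
proof -
  have fin: "finite V" using g by (simp add: wgraph_def)
  have "vol V w V = deg V w a + (\<Sum>v\<in>V - {a}. deg V w v)"
    unfolding vol_def using fin a by (simp add: sum.remove)
  moreover have "(\<Sum>v\<in>V - {a}. w v a) \<le> (\<Sum>v\<in>V - {a}. deg V w v)"
  proof (rule sum_mono)
    fix v assume "v \<in> V - {a}"
    show "w v a \<le> deg V w v" unfolding deg_def
      using g a fin by (intro member_le_sum) (auto simp: wgraph_def)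
  qed
  moreover have "(\<Sum>v\<in>V - {a}. w v a) = deg V w a"
  proof -
    have "deg V w a = w a a + (\<Sum>v\<in>V - {a}. w a v)" unfolding deg_def using fin a by (simp add: sum.remove)
    moreover have "w a a = 0" using g by (simp add: wgraph_def)
    moreover have "(\<Sum>v\<in>V - {a}. w a v) = (\<Sum>v\<in>V - {a}. w v a)" using g by (simp add: wgraph_def)
    ultimately show ?thesis by simp
  qed
  ultimately show ?thesis by simp
qed

lemma vol_diff: "finite V \<Longrightarrow> X \<subseteq> V \<Longrightarrow> vol V w (V - X) = vol V w V - vol V w X"
  unfolding vol_def by (simp add: sum_diff)

lemma cut_sym: "(\<forall>u v. w u v = w v u) \<Longrightarrow> cut_weight w A B = cut_weight w B A"
  unfolding cut_weight_def by (subst sum.swap) simp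

definition Cset where "Cset V w = {S. S \<noteq> {} \<and> S \<subset> V \<and> vol V w S \<le> vol V w V / 2}"

lemma cond_le:
  assumes "finite V" "S \<in> Cset V w"
  shows "conductance V w \<le> set_conductance V w S"
proof -
  have "finite (Cset V w)" using assms(1) unfolding Cset_def
    by (rule finite_subset[rotated, OF finite_Pow_iff[THEN iffD2]]) auto
  then show ?thesis unfolding conductance_def Cset_def[symmetric] using assms(2) by simp
qed

lemma cond_nonneg:
  assumes g: "wgraph V w" and c: "card V \<ge> 2"
  shows "conductance V w \<ge> 0"
proof -
  have fin: "finite V" using g by (simp add: wgraph_def)
  have fC: "finite (Cset V w)" using fin unfolding Cset_def
    by (rule finite_subset[rotated, OF finite_Pow_iff[THEN iffD2]]) auto
  obtain a where a: "a \<in> V" using c by fastforce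
  have "{a} \<subset> V"
  proof -
    have "V \<noteq> {a}" using c by auto
    then show ?thesis using a by auto
  qed
  moreover have "vol V w {a} \<le> vol V w V / 2" using deg_half[OF g a] by (simp add: vol_def)
  ultimately have "{a} \<in> Cset V w" by (simp add: Cset_def)
  then have ne: "set_conductance V w ` Cset V w \<noteq> {}" by blast
  have "\<forall>x \<in> set_conductance V w ` Cset V w. 0 \<le> x"
  proof
    fix x assume "x \<in> set_conductance V w ` Cset V w"
    then obtain Y where "x = set_conductance V w Y" by blast
    moreover have "cut_weight w Y (V - Y) \<ge> 0" using g by (intro cut_nonneg) (simp add: wgraph_def)
    moreover have "vol V w Y \<ge> 0" using vol_nonneg[OF g] .
    ultimately show "0 \<le> x" by (simp add: set_conductance_def)
  qed
  then show ?thesis unfolding conductance_def Cset_def[symmetric]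
    using fC ne by (simp add: Min_ge_iff)
qed

lemma node_bound:
  assumes g: "wgraph V w" and X: "X \<subseteq> V" "X \<noteq> {}"
  shows "conductance V w * min (vol V w X) (vol V w V - vol V w X) \<le> cut_weight w X (V - X)"
proof -
  have fin: "finite V" using g by (simp add: wgraph_def)
  have w0: "\<forall>u v. w u v \<ge> 0" and ws: "\<forall>u v. w u v = w v u" using g by (auto simp: wgraph_def)
  let ?p = "conductance V w"
  have key: "?p * vol V w Y \<le> cut_weight w Y (V - Y)" if "Y \<in> Cset V w" for Y
  proof (cases "vol V w Y = 0")
    case True then show ?thesis using cut_nonneg[OF w0] by simp
  next
    case False
    then have pos: "vol V w Y > 0" using vol_nonneg[OF g, of Y] by simp
    have "?p \<le> cut_weight w Y (V - Y) / vol V w Y"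
      using cond_le[OF fin that] by (simp add: set_conductance_def)
    then show ?thesis using pos by (simp add: pos_le_divide_eq)
  qed
  show ?thesis
  proof (cases "X = V")
    case True
    then show ?thesis using vol_nonneg[OF g, of V] by (simp add: cut_weight_def)
  next
    case nV: False
    show ?thesis
    proof (cases "vol V w X \<le> vol V w V / 2")
      case True
      then have "X \<in> Cset V w" using X nV by (auto simp: Cset_def)
      then show ?thesis using key True by (simp add: min_def)
    next
      case False
      let ?Y = "V - X"
      have "?Y \<noteq> {}" using X nV by auto
      moreover have "?Y \<subset> V" using X by auto
      moreover have vY: "vol V w ?Y = vol V w V - vol V w X" using vol_diff[OF fin X(1)] .
      ultimately have "?Y \<in> Cset V w" using False by (auto simp: Cset_def)
      then have "?p * vol V w ?Y \<le> cut_weight w ?Y (V - ?Y)" by (rule key)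
      moreover have "V - ?Y = X" using X by auto
      moreover have "cut_weight w ?Y X = cut_weight w X ?Y" using cut_sym[OF ws] .
      ultimately show ?thesis using False vY by (simp add: min_def)
    qed
  qed
qed



lemma aux49: "(a::real) = 1/4 * q \<Longrightarrow> 0 \<le> q \<Longrightarrow> b = 2/9 * q \<Longrightarrow> b \<le> a"
  by linarith

lemma maxm: "(c::real) \<ge> 0 \<Longrightarrow> max (c*a) (c*b) = c * max a b"
proof (cases "a \<le> b")
  case True
  assume c: "c \<ge> 0"
  then have "c*a \<le> c*b" using True by (rule mult_left_mono[rotated])
  then show ?thesis using True by (simp add: max_absorb2)
next
  case False
  assume c: "c \<ge> 0"
  then have "c*b \<le> c*a" using False by (intro mult_left_mono) auto
  then show ?thesis using False by (simp add: max_absorb1)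
qed

theorem lemma3p2:
  fixes V :: "'a set" and w :: "'a \<Rightarrow> 'a \<Rightarrow> real" and T :: "'a hctree"
  assumes "wgraph V w"
    and "card V \<ge> 2"
    and "optimal_hctree V w T"
  shows "hc_cost V w T \<ge> 2 * conductance V w / 9 *
           max (vol V w V ^ 2 / dmax V w) (dmin V w * real (card V) ^ 2)
       \<and> 2 * conductance V w / 9 *
           max (vol V w V ^ 2 / dmax V w) (dmin V w * real (card V) ^ 2)
         = 2 * conductance V w / 9 * real (card V) * vol V w V *
           max (davg V w / dmax V w) (dmin V w / davg V w)"
proof -
  note g = assms(1)
  have fin: "finite V" and w0: "\<forall>u v. w u v \<ge> 0" and wd: "\<forall>u. w u u = 0"
    using g by (auto simp: wgraph_def)
  define n where "n = card V"
  have n2: "n \<ge> 2" using assms(2) by (simp add: n_def)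
  have Vne: "V \<noteq> {}" using n2 n_def by auto
  define p where "p = conductance V w"
  have p0: "p \<ge> 0" unfolding p_def using cond_nonneg[OF g assms(2)] .
  define vl where "vl = vol V w V"
  have vl0: "vl \<ge> 0" unfolding vl_def using vol_nonneg[OF g] .
  define dM where "dM = dmax V w"
  define dm where "dm = dmin V w"
  have degM: "deg V w a \<le> dM" if "a \<in> V" for a
    unfolding dM_def dmax_def using fin that by simp
  have degm: "dm \<le> deg V w a" if "a \<in> V" for a
    unfolding dm_def dmin_def using fin that by simp
  have dm0: "dm \<ge> 0"
  proof -
    have "dm \<in> deg V w ` V" unfolding dm_def dmin_def using fin Vne by (intro Min_in) auto
    then show ?thesis using deg_nonneg[OF g] by auto
  qed
  obtain a0 where a0: "a0 \<in> V" using Vne by blast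
  have dM0: "dM \<ge> 0" using degM[OF a0] deg_nonneg[OF g, of a0] by simp
  have tr: "distinct (leaves T)" "set (leaves T) = V" using assms(3) by (auto simp: optimal_hctree_def is_hctree_def)
  have lenT: "length (leaves T) = n" unfolding n_def using tr distinct_card by metis
  have cost: "hc_cost V w T = (1/2) * (\<Sum>k<n. gk V w k T)"
  proof -
    have "(\<Sum>u\<in>V. \<Sum>v\<in>V. w u v * real (lca_size T u v)) = (\<Sum>u\<in>V. \<Sum>v\<in>V. w u v * real (lca' T u v))"
      using tr lca_size_eq[of T] by (intro sum.cong refl) auto
    moreover have "(\<Sum>u\<in>V. \<Sum>v\<in>V. w u v * real (lca' T u v)) + real n * cut_weight w V (V - V) = (\<Sum>k<n. gk V w k T)"
      using D_eq[of V w T, OF fin wd tr(1)] tr lenT by simp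
    moreover have "cut_weight w V (V - V) = 0" by (simp add: cut_weight_def)
    ultimately show ?thesis unfolding hc_cost_def by simp
  qed
  have gnn: "\<And>k. 0 \<le> gk V w k T" using gk_nonneg[OF w0] .
  have bA: "2 * p / 9 * (vl ^ 2 / dM) \<le> hc_cost V w T"
  proof (cases "dM = 0")
    case True
    have "0 \<le> (\<Sum>k<n. gk V w k T)" by (rule sum_nonneg) (rule gnn)
    then show ?thesis using cost True by simp
  next
    case False
    then have dMp: "dM > 0" using dM0 by simp
    define x where "x = vl / (2 * dM)"
    have x0: "x \<ge> 0" unfolding x_def using vl0 dMp by simp
    define m where "m = nat \<lfloor>x\<rfloor>"
    have mx: "real m \<le> x" unfolding m_def using x0 by simp
    have fl0: "\<lfloor>x\<rfloor> \<ge> 0" using x0 by simp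
    have "real m = of_int \<lfloor>x\<rfloor>" unfolding m_def using fl0 by simp
    then have mx1: "x \<le> real m + 1" using floor_correct[of x] by simp
    have vlb: "vl \<le> real n * dM" unfolding vl_def vol_def n_def
      using degM sum_bounded_above[of V "deg V w" dM] by simp
    have "x \<le> real n / 2" unfolding x_def using vlb dMp by (simp add: divide_simps)
    then have mn: "m < n" using mx n2 by linarith
    have lowk: "p * vl \<le> gk V w k T" if k: "k \<le> m" for k
    proof -
      have "sum (\<lambda>x. p * deg V w x) (set (leaves T)) \<le> gk V w k T"
      proof (rule g_lower[OF fin _ tr(1)])
        fix X assume X: "X \<subseteq> V" "X \<noteq> {}" "card X \<le> max k 1"
        have finX: "finite X" using X fin finite_subset by auto
        have "vol V w X \<le> vl / 2"
        proof (cases "card X \<le> 1")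
          case True
          then have "card X = 1" using X finX by (simp add: le_Suc_eq card_0_eq)
          then obtain a where Xa: "X = {a}" by (rule card_1_singletonE)
          then have "a \<in> V" using X by auto
          then show ?thesis using deg_half[OF g, of a] Xa by (simp add: vol_def vl_def)
        next
          case False
          then have ck: "real (card X) \<le> real m" using X k by simp
          have "vol V w X \<le> real (card X) * dM" unfolding vol_def
            using degM X sum_bounded_above[of X "deg V w" dM] by auto
          also have "\<dots> \<le> x * dM" using ck mx dMp by (intro mult_right_mono) auto
          also have "\<dots> = vl / 2" unfolding x_def using dMp by simp
          finally show ?thesis .
        qed
        then have "min (vol V w X) (vl - vol V w X) = vol V w X" by simp
        then show "sum (\<lambda>x. p * deg V w x) X \<le> cut_weight w X (V - X)"
          using node_bound[OF g X(1,2)] by (simp add: p_def vl_def sum_distrib_left[symmetric] vol_def)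
      qed (use tr in auto)
      then show ?thesis using tr by (simp add: sum_distrib_left[symmetric] vol_def vl_def)
    qed
    have "real (m+1) * (p * vl) \<le> (\<Sum>k<n. gk V w k T)"
      by (rule count_bound[OF mn lowk gnn])
    moreover have "x * (p * vl) \<le> real (m+1) * (p * vl)"
      using mx1 p0 vl0 by (intro mult_right_mono) auto
    ultimately have "x * (p * vl) / 2 \<le> hc_cost V w T" using cost by simp
    moreover have "2 * p / 9 * (vl ^ 2 / dM) \<le> x * (p * vl) / 2"
    proof -
      have "x * (p * vl) / 2 = (1/4) * (p * vl ^ 2 / dM)" unfolding x_def using dMp
        by (simp add: power2_eq_square field_simps)
      moreover have "p * vl ^ 2 / dM \<ge> 0" using p0 dMp by simp
      moreover have "2 * p / 9 * (vl ^ 2 / dM) = (2/9) * (p * vl ^ 2 / dM)" by simp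
      ultimately show ?thesis by (rule aux49)
    qed
    ultimately show ?thesis by simp
  qed
  have bB: "2 * p / 9 * (dm * real n ^ 2) \<le> hc_cost V w T"
  proof -
    define m where "m = n div 2"
    have mn: "m < n" unfolding m_def using n2 by simp
    have lowk: "p * dm * real n \<le> gk V w k T" if k: "k \<le> m" for k
    proof -
      have "sum (\<lambda>x. p * dm) (set (leaves T)) \<le> gk V w k T"
      proof (rule g_lower[OF fin _ tr(1)])
        fix X assume X: "X \<subseteq> V" "X \<noteq> {}" "card X \<le> max k 1"
        have finX: "finite X" using X fin finite_subset by auto
        have c2: "2 * card X \<le> n" using X(3) k n2 unfolding m_def by auto
        have cd: "card (V - X) = n - card X" unfolding n_def using X finX by (simp add: card_Diff_subset)
        have v1: "real (card X) * dm \<le> vol V w X" unfolding vol_def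
          using degm X sum_bounded_below[of X dm "deg V w"] by auto
        have "real (card (V - X)) * dm \<le> vol V w (V - X)" unfolding vol_def
          using degm sum_bounded_below[of "V - X" dm "deg V w"] by auto
        moreover have "real (card X) * dm \<le> real (card (V - X)) * dm"
          using cd c2 dm0 by (intro mult_right_mono) auto
        ultimately have v2: "real (card X) * dm \<le> vl - vol V w X"
          using vol_diff[OF fin X(1)] by (simp add: vl_def)
        have "real (card X) * dm \<le> min (vol V w X) (vl - vol V w X)" using v1 v2 by simp
        then have "p * (real (card X) * dm) \<le> p * min (vol V w X) (vl - vol V w X)"
          using p0 by (intro mult_left_mono)
        then show "sum (\<lambda>x. p * dm) X \<le> cut_weight w X (V - X)"
          using node_bound[OF g X(1,2)] by (simp add: p_def vl_def algebra_simps)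
      qed (use tr in auto)
      then show ?thesis using tr by (simp add: n_def algebra_simps)
    qed
    have pd: "p * dm * real n \<ge> 0" using p0 dm0 by simp
    have "real (m+1) * (p * dm * real n) \<le> (\<Sum>k<n. gk V w k T)"
      by (rule count_bound[OF mn lowk gnn])
    moreover have "real n / 2 \<le> real (m+1)" unfolding m_def by linarith
    then have "real n / 2 * (p * dm * real n) \<le> real (m+1) * (p * dm * real n)"
      using pd by (intro mult_right_mono) auto
    ultimately have "real n / 2 * (p * dm * real n) / 2 \<le> hc_cost V w T" using cost by simp
    moreover have "2 * p / 9 * (dm * real n ^ 2) \<le> real n / 2 * (p * dm * real n) / 2"
    proof -
      have "real n / 2 * (p * dm * real n) / 2 = (1/4) * (p * dm * real n ^ 2)"
        by (simp add: power2_eq_square)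
      moreover have "p * dm * real n ^ 2 \<ge> 0" using p0 dm0 by simp
      moreover have "2 * p / 9 * (dm * real n ^ 2) = (2/9) * (p * dm * real n ^ 2)" by simp
      ultimately show ?thesis by (rule aux49)
    qed
    ultimately show ?thesis by simp
  qed
  have part1: "2 * p / 9 * max (vl ^ 2 / dM) (dm * real n ^ 2) \<le> hc_cost V w T"
    using bA bB by (metis max_def)
  define da where "da = davg V w"
  have vda: "vl = real n * da" unfolding vl_def da_def davg_def vol_def n_def using n2 n_def by simp
  have e1: "vl ^ 2 / dM = real n * vl * (da / dM)" using vda by (simp add: power2_eq_square)
  have e2: "dm * real n ^ 2 = real n * vl * (dm / da)"
  proof (cases "da = 0")
    case True
    then have "vl = 0" using vda by simp
    then have "real n * dm \<le> 0" using sum_bounded_below[of V dm "deg V w"] degm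
      unfolding vl_def vol_def n_def by auto
    then have "dm = 0" using dm0 n2 by (simp add: mult_le_0_iff)
    then show ?thesis using True by simp
  next
    case False
    then show ?thesis using vda n2 by (simp add: power2_eq_square field_simps)
  qed
  have nv0: "real n * vl \<ge> 0" using vl0 by simp
  have "max (vl ^ 2 / dM) (dm * real n ^ 2) = real n * vl * max (da / dM) (dm / da)"
    unfolding e1 e2 using nv0 by (rule maxm)
  then have part2: "2 * p / 9 * max (vl ^ 2 / dM) (dm * real n ^ 2) = 2 * p / 9 * real n * vl * max (da / dM) (dm / da)"
    by (simp add: mult.assoc)
  show ?thesis using part1 part2 unfolding p_def vl_def dM_def dm_def da_def n_def by simp
qed


end
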